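(* Let $\mathcal A$ be a causal linear time-invariant algorithm with $n$ oracles and transfer function $\hat H(z)$, let $\kappa$ be a subset of its oracles with $D[\kappa]$ invertible, and let $\pi=(m+1,\dots,n,1,\dots,m)$ be a cyclic permutation of the oracles. Then conjugation and cyclic permutation commute: $\mathcal C_\kappa P_\pi\mathcal A$ and $P_\pi\mathcal C_\kappa\mathcal A$ have identical transfer functions.
   Context: A linear time-invariant algorithm with realization $(A,B,C,D)$ generates $x^{k+1}=Ax^k+Bu^k$, $y^k=Cx^k+Du^k$, $u^k=\phi(y^k)$, with oracles $\partial f_1,\dots,\partial f_n$ ((sub)gradients of convex functions) called sequentially in the order $1,\dots,n$; its transfer function is $\hat H(z)=C(zI-A)^{-1}B+D$. Causality means $D$ (blockwise by oracle, in call order) is lower triangular. $D[\kappa]$ is the principal block of $D$ indexed by $\kappa$. $P_\pi\mathcal A$ denotes the algorithm that executes the update equations of $\mathcal A$ in a different order so that the oracle calls within each iteration occur in the order $\pi$. $\mathcal C_\kappa\mathcal A$ denotes the algorithm obtained by rewriting $\mathcal A$ to call $\partial f_i^\star=(\partial f_i)^{-1}$ ($f^\star$ the Fenchel conjugate) instead of $\partial f_i$ for each $i\in\kappa$, thereby swapping oracle argument and output for those oracles. *)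

theory Defs
  imports Complex_Main "Jordan_Normal_Form.DL_Submatrix"
    "Jordan_Normal_Form.Gauss_Jordan_Elimination" "Jordan_Normal_Form.Determinant"
begin

text \<open>A linear time-invariant algorithm with n (scalar) oracles, labelled 0,...,n-1
  and called in this order within each iteration, is given by a real
  state-space realization (A,B,C,D): x(k+1) = A x(k) + B u(k), y(k) = C x(k) + D u(k).
  Vectors u, y are indexed by oracle label.\<close>

type_synonym lti = "real mat \<times> real mat \<times> real mat \<times> real mat"

definition lti_wf :: "nat \<Rightarrow> lti \<Rightarrow> bool" where
  "lti_wf n R = (case R of (A, B, C, D) \<Rightarrow>
     (\<exists>s. A \<in> carrier_mat s s \<and> B \<in> carrier_mat s n \<and> C \<in> carrier_mat n s \<and> D \<in> carrier_mat n n))"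

text \<open>Causality: D is lower triangular with respect to the call order 0,...,n-1.\<close>
definition causal :: "nat \<Rightarrow> lti \<Rightarrow> bool" where
  "causal n R = (case R of (A, B, C, D) \<Rightarrow>
     (\<forall>i<n. \<forall>j<n. i < j \<longrightarrow> D $$ (i, j) = 0))"

text \<open>Principal block D[kappa] of D.\<close>
definition Dblock :: "lti \<Rightarrow> nat set \<Rightarrow> real mat" where
  "Dblock R \<kappa> = (case R of (A, B, C, D) \<Rightarrow> submatrix D \<kappa> \<kappa>)"

text \<open>Diagonal 0/1 indicator matrix of a set of oracles.\<close>
definition ind_mat :: "nat \<Rightarrow> nat set \<Rightarrow> real mat" where
  "ind_mat n S = mat n n (\<lambda>(i, j). if i = j \<and> i \<in> S then 1 else 0)"

definition minv :: "'a :: field mat \<Rightarrow> 'a mat" where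
  "minv M = the (mat_inverse M)"

text \<open>Conjugation C_kappa: oracles in kappa are replaced by their inverses, i.e. for
  i in kappa the new input is y_i and the new output is u_i (other coordinates unchanged).
  With E the indicator of kappa and T = E D + (I - E) (invertible iff D[kappa] is),
  u = T^{-1} (u' - E C x), which yields the realization below.\<close>
definition conj_alg :: "nat \<Rightarrow> nat set \<Rightarrow> lti \<Rightarrow> lti" where
  "conj_alg n \<kappa> R = (case R of (A, B, C, D) \<Rightarrow>
     (let E = ind_mat n \<kappa>; I = 1\<^sub>m n; T = E * D + (I - E); Ti = minv T;
          M = E + (I - E) * D
      in (A - B * Ti * E * C, B * Ti, (I - E) * C - M * Ti * E * C, M * Ti)))"

text \<open>Cyclic permutation P_pi with pi = (m+1,...,n,1,...,m) (1-based), i.e. in 0-based labels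
  the oracles m,...,n-1 are called first, followed by 0,...,m-1 of the next original
  iteration: u'(k)_i = u(k)_i, y'(k)_i = y(k)_i for i >= m and u'(k)_i = u(k+1)_i,
  y'(k)_i = y(k+1)_i for i < m.  The state of the new algorithm is (x(k), F u(k)), where F
  is the indicator of {0,...,m-1}; causality (F D (I-F) = 0) is used.\<close>
definition perm_alg :: "nat \<Rightarrow> nat \<Rightarrow> lti \<Rightarrow> lti" where
  "perm_alg n m R = (case R of (A, B, C, D) \<Rightarrow>
     (let s = dim_row A; F = ind_mat n {..<m}; G = 1\<^sub>m n - F
      in (four_block_mat A (B * F) (0\<^sub>m n s) (0\<^sub>m n n),
          (B * G) @\<^sub>r F,
          four_block_mat (G * C + F * C * A) (G * D * F + F * C * B * F)
                         (0\<^sub>m 0 s) (0\<^sub>m 0 n),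
          G * D * G + F * C * B * G + F * D * F)))"

text \<open>Transfer function H(z) = C (zI - A)^{-1} B + D, defined where det(zI - A) \<noteq> 0.\<close>
definition res_ok :: "lti \<Rightarrow> complex \<Rightarrow> bool" where
  "res_ok R z = (case R of (A, B, C, D) \<Rightarrow>
     det (z \<cdot>\<^sub>m 1\<^sub>m (dim_row A) - map_mat complex_of_real A) \<noteq> 0)"

definition transfer :: "lti \<Rightarrow> complex \<Rightarrow> complex mat" where
  "transfer R z = (case R of (A, B, C, D) \<Rightarrow>
     map_mat complex_of_real C * minv (z \<cdot>\<^sub>m 1\<^sub>m (dim_row A) - map_mat complex_of_real A)
       * map_mat complex_of_real B + map_mat complex_of_real D)"

text \<open>Two algorithms have identical transfer functions (as rational matrix functions)
  iff the transfer matrices agree at every z where both are defined.\<close>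
definition same_transfer :: "lti \<Rightarrow> lti \<Rightarrow> bool" where
  "same_transfer R1 R2 = (\<forall>z. res_ok R1 z \<longrightarrow> res_ok R2 z \<longrightarrow> transfer R1 z = transfer R2 z)"

end

theory Submission
  imports Defs
begin

section \<open>Dimension-driven wrappers\<close>

lemma mv_add[simp]: "dim_col A = dim_vec v \<Longrightarrow> dim_vec w = dim_vec v \<Longrightarrow>
  (A::'a::comm_ring mat) *\<^sub>v (v + w) = A *\<^sub>v v + A *\<^sub>v w"
  by (rule mult_add_distrib_mat_vec[of A "dim_row A" "dim_vec v"], auto intro!: carrier_matI carrier_vecI)

lemma mv_minus[simp]: "dim_col A = dim_vec v \<Longrightarrow> dim_vec w = dim_vec v \<Longrightarrow>
  (A::'a::comm_ring mat) *\<^sub>v (v - w) = A *\<^sub>v v - A *\<^sub>v w"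
  by (rule mult_minus_distrib_mat_vec[of A "dim_row A" "dim_vec v"], auto intro!: carrier_matI carrier_vecI)

lemma mv_assoc[simp]: "dim_col A = dim_row B \<Longrightarrow> dim_col B = dim_vec v \<Longrightarrow>
  ((A::'a::comm_ring mat) * B) *\<^sub>v v = A *\<^sub>v (B *\<^sub>v v)"
  by (rule assoc_mult_mat_vec[of A "dim_row A" "dim_row B" B "dim_col B"], auto intro!: carrier_matI carrier_vecI)

lemma mv_addm[simp]: "dim_row A = dim_row B \<Longrightarrow> dim_col A = dim_col B \<Longrightarrow> dim_col A = dim_vec v \<Longrightarrow>
  ((A::'a::comm_ring mat) + B) *\<^sub>v v = A *\<^sub>v v + B *\<^sub>v v"
  by (rule add_mult_distrib_mat_vec[of A "dim_row A" "dim_col A"], auto intro!: carrier_matI carrier_vecI)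

lemma mv_minusm[simp]: "dim_row A = dim_row B \<Longrightarrow> dim_col A = dim_col B \<Longrightarrow> dim_col A = dim_vec v \<Longrightarrow>
  ((A::'a::comm_ring mat) - B) *\<^sub>v v = A *\<^sub>v v - B *\<^sub>v v"
  by (rule minus_mult_distrib_mat_vec[of A "dim_row A" "dim_col A"], auto intro!: carrier_matI carrier_vecI)

lemma mv_one[simp]: "dim_vec v = n \<Longrightarrow> 1\<^sub>m n *\<^sub>v (v::'a::comm_ring_1 vec) = v"
  by (rule one_mult_mat_vec, auto intro!: carrier_vecI)

lemma mv_zero[simp]: "dim_vec v = nc \<Longrightarrow> 0\<^sub>m nr nc *\<^sub>v (v::'a::comm_ring_1 vec) = 0\<^sub>v nr"
  by (intro eq_vecI, auto simp: scalar_prod_def)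

lemma mv_smult[simp]: "dim_col A = dim_vec v \<Longrightarrow> (c \<cdot>\<^sub>m (A::'a::comm_ring_1 mat)) *\<^sub>v v = c \<cdot>\<^sub>v (A *\<^sub>v v)"
  by (intro eq_vecI, auto simp: scalar_prod_def sum_distrib_left ac_simps)

lemma ind_dims[simp]: "dim_row (ind_mat n S) = n" "dim_col (ind_mat n S) = n"
  by (auto simp: ind_mat_def)

lemma ind_idx[simp]: "i < n \<Longrightarrow> dim_vec v = n \<Longrightarrow> (ind_mat n S *\<^sub>v v) $ i = (if i \<in> S then v $ i else 0)"
proof -
  assume i: "i < n" and v: "dim_vec v = n"
  have "(ind_mat n S *\<^sub>v v) $ i = (\<Sum>j<n. (if i = j \<and> i \<in> S then 1 else 0) * v $ j)"
    using i v by (simp add: ind_mat_def scalar_prod_def lessThan_atLeast0)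
  also have "\<dots> = (\<Sum>j<n. if j = i then (if i \<in> S then v $ i else 0) else 0)"
    by (rule sum.cong, auto)
  also have "\<dots> = (if i \<in> S then v $ i else 0)" using i by simp
  finally show ?thesis .
qed

lemma ind_ind[simp]: "dim_vec v = n \<Longrightarrow> ind_mat n S *\<^sub>v (ind_mat n S' *\<^sub>v v) = ind_mat n (S \<inter> S') *\<^sub>v v"
  by (intro eq_vecI, auto simp del: index_mult_mat_vec)

lemma sum_delta_mult: "j < (nc::nat) \<Longrightarrow> (\<Sum>ia = 0..<nc. f ia * (if ia = j then 1 else (0::'a::comm_ring_1))) = f j"
proof -
  assume j: "j < nc"
  have "(\<Sum>ia = 0..<nc. f ia * (if ia = j then 1 else (0::'a))) = (\<Sum>ia = 0..<nc. if ia = j then f j else 0)"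
    by (rule sum.cong) auto
  also have "\<dots> = f j" using j by simp
  finally show ?thesis .
qed

lemma mat_eq_on_vec: assumes "A \<in> carrier_mat nr nc" "B \<in> carrier_mat nr nc"
  and "\<And>v. dim_vec v = nc \<Longrightarrow> A *\<^sub>v v = (B :: 'a :: comm_ring_1 mat) *\<^sub>v v"
shows "A = B"
proof (rule eq_matI)
  fix i j assume i: "i < dim_row B" and j: "j < dim_col B"
  have "(A *\<^sub>v unit_vec nc j) $ i = (B *\<^sub>v unit_vec nc j) $ i" using assms(3)[of "unit_vec nc j"] by simp
  thus "A $$ (i,j) = B $$ (i,j)" using assms(1,2) i j
    by (simp add: scalar_prod_def unit_vec_def sum_delta_mult)
qed (insert assms, auto)

section \<open>Invertibility\<close>

lemma minv_from_inj:
  assumes T: "(T :: 'a :: field mat) \<in> carrier_mat n n"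
    and inj: "\<And>z. dim_vec z = n \<Longrightarrow> T *\<^sub>v z = 0\<^sub>v n \<Longrightarrow> z = 0\<^sub>v n"
  shows "T * minv T = 1\<^sub>m n" "minv T * T = 1\<^sub>m n" "minv T \<in> carrier_mat n n"
proof -
  have "det T \<noteq> 0"
  proof
    assume "det T = 0"
    then obtain v where "v \<in> carrier_vec n" "v \<noteq> 0\<^sub>v n" "T *\<^sub>v v = 0\<^sub>v n"
      using det_0_iff_vec_prod_zero[OF T] by blast
    with inj show False by auto
  qed
  hence U: "T \<in> Units (ring_mat TYPE('a) n ())" by (rule det_non_zero_imp_unit[OF T])
  then obtain B where MB: "mat_inverse T = Some B"
    using mat_inverse(1)[OF T, of "()"] by (cases "mat_inverse T", auto)
  hence mB: "minv T = B" by (simp add: minv_def)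
  from mat_inverse(2)[OF T MB] show "T * minv T = 1\<^sub>m n" "minv T * T = 1\<^sub>m n" "minv T \<in> carrier_mat n n"
    unfolding mB by auto
qed

lemma tri_inj:
  assumes T: "(T :: 'a :: field mat) \<in> carrier_mat n n"
    and low: "\<And>i j. i < j \<Longrightarrow> j < n \<Longrightarrow> T $$ (i,j) = 0"
    and dg: "\<And>i. i < n \<Longrightarrow> T $$ (i,i) \<noteq> 0"
    and z: "dim_vec z = n"
    and out: "\<And>j. j < n \<Longrightarrow> j \<notin> P \<Longrightarrow> z $ j = 0"
    and inP: "\<And>i. i < n \<Longrightarrow> i \<in> P \<Longrightarrow> (T *\<^sub>v z) $ i = 0"
  shows "\<And>i. i < n \<Longrightarrow> z $ i = 0"
proof -
  have "i < n \<longrightarrow> z $ i = 0" for i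
  proof (induction i rule: less_induct)
    case (less i)
    show ?case
    proof (intro impI)
      assume i: "i < n"
      show "z $ i = 0"
      proof (cases "i \<in> P")
        case False
        thus ?thesis using out i by auto
      next
        case True
        have "(T *\<^sub>v z) $ i = (\<Sum>j = 0..<n. T $$ (i,j) * z $ j)"
          using T z i by (simp add: scalar_prod_def)
        also have "\<dots> = (\<Sum>j = 0..<n. if j = i then T $$ (i,i) * z $ i else 0)"
        proof (rule sum.cong)
          fix j assume j: "j \<in> {0..<n}"
          show "T $$ (i,j) * z $ j = (if j = i then T $$ (i,i) * z $ i else 0)"
          proof (cases "j < i")
            case True thus ?thesis using less.IH[of j] i by auto
          next
            case False thus ?thesis using low[of i j] j by (cases "j = i", auto)
          qed
        qed simp
        also have "\<dots> = T $$ (i,i) * z $ i" using i by simp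
        finally have "T $$ (i,i) * z $ i = 0" using inP[OF i True] by simp
        thus ?thesis using dg[OF i] by simp
      qed
    qed
  qed
  thus "\<And>i. i < n \<Longrightarrow> z $ i = 0" by blast
qed

section \<open>Step semantics of conjugation and permutation\<close>

lemma vec_eq_entries: "dim_vec v = dim_vec w \<Longrightarrow> (\<And>i. i < dim_vec w \<Longrightarrow> v $ i = w $ i) \<Longrightarrow> v = w"
  by (intro eq_vecI) auto

lemma mv_cancel: assumes "T * Ti = 1\<^sub>m n" "T \<in> carrier_mat n n" "Ti \<in> carrier_mat n n" "dim_vec (y::'a::comm_ring_1 vec) = n"
  shows "T *\<^sub>v (Ti *\<^sub>v y) = y"
proof -
  have "T *\<^sub>v (Ti *\<^sub>v y) = (T * Ti) *\<^sub>v y" using assms by (subst mv_assoc) auto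
  thus ?thesis using assms by simp
qed

lemma conj_step:
  fixes A B C D Ti :: "real mat"
  assumes A: "A \<in> carrier_mat s s" and B: "B \<in> carrier_mat s n" and C: "C \<in> carrier_mat n s"
    and D: "D \<in> carrier_mat n n" and Ti: "Ti \<in> carrier_mat n n"
    and Tdef: "Ti = minv (ind_mat n \<kappa> * D + (1\<^sub>m n - ind_mat n \<kappa>))"
    and Tinv: "(ind_mat n \<kappa> * D + (1\<^sub>m n - ind_mat n \<kappa>)) * Ti = 1\<^sub>m n"
    and cj: "conj_alg n \<kappa> (A, B, C, D) = (A', B', C', D')"
    and x: "dim_vec x = s" and a: "dim_vec a = n"
    and u: "u = Ti *\<^sub>v (a - ind_mat n \<kappa> *\<^sub>v (C *\<^sub>v x))"
  shows "A' *\<^sub>v x + B' *\<^sub>v a = A *\<^sub>v x + B *\<^sub>v u"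
    "C' *\<^sub>v x + D' *\<^sub>v a = ind_mat n \<kappa> *\<^sub>v u + (1\<^sub>m n - ind_mat n \<kappa>) *\<^sub>v (C *\<^sub>v x + D *\<^sub>v u)"
    "a = ind_mat n \<kappa> *\<^sub>v (C *\<^sub>v x + D *\<^sub>v u) + (1\<^sub>m n - ind_mat n \<kappa>) *\<^sub>v u"
proof -
  let ?E = "ind_mat n \<kappa>"
  let ?M = "?E + (1\<^sub>m n - ?E) * D"
  have dims[simp]: "dim_row A = s" "dim_col A = s" "dim_row B = s" "dim_col B = n" "dim_row C = n" "dim_col C = s"
    "dim_row D = n" "dim_col D = n" "dim_row Ti = n" "dim_col Ti = n"
    using A B C D Ti by auto
  from cj have A': "A' = A - B * Ti * ?E * C" and B': "B' = B * Ti"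
    and C': "C' = (1\<^sub>m n - ?E) * C - ?M * Ti * ?E * C" and D': "D' = ?M * Ti"
    unfolding conj_alg_def Let_def Tdef by auto
  show "A' *\<^sub>v x + B' *\<^sub>v a = A *\<^sub>v x + B *\<^sub>v u"
    unfolding A' B' u using x a by (intro vec_eq_entries) auto
  show "C' *\<^sub>v x + D' *\<^sub>v a = ?E *\<^sub>v u + (1\<^sub>m n - ?E) *\<^sub>v (C *\<^sub>v x + D *\<^sub>v u)"
    unfolding C' D' u using x a by (intro vec_eq_entries) auto
  have du: "dim_vec u = n" using u by simp
  have Tu: "(?E * D + (1\<^sub>m n - ?E)) *\<^sub>v u = a - ?E *\<^sub>v (C *\<^sub>v x)"
    unfolding u by (rule mv_cancel[OF Tinv _ Ti], insert D x a, auto)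
  show "a = ?E *\<^sub>v (C *\<^sub>v x + D *\<^sub>v u) + (1\<^sub>m n - ?E) *\<^sub>v u"
  proof (intro vec_eq_entries)
    fix i assume i: "i < dim_vec (?E *\<^sub>v (C *\<^sub>v x + D *\<^sub>v u) + (1\<^sub>m n - ?E) *\<^sub>v u)"
    hence i: "i < n" by simp
    have "((?E * D + (1\<^sub>m n - ?E)) *\<^sub>v u) $ i = (a - ?E *\<^sub>v (C *\<^sub>v x)) $ i" using Tu by simp
    thus "a $ i = (?E *\<^sub>v (C *\<^sub>v x + D *\<^sub>v u) + (1\<^sub>m n - ?E) *\<^sub>v u) $ i"
      using i du x a by (auto split: if_splits)
  qed (insert a, simp)
qed

lemma append_rows_mv: assumes "dim_col P = dim_vec a" "dim_col Q = dim_vec a"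
  shows "(P @\<^sub>r Q) *\<^sub>v (a::'a::comm_ring_1 vec) = (P *\<^sub>v a) @\<^sub>v (Q *\<^sub>v a)"
proof -
  have P: "P \<in> carrier_mat (dim_row P) (dim_vec a)" and Q: "Q \<in> carrier_mat (dim_row Q) (dim_vec a)"
    using assms by (auto intro!: carrier_matI)
  have "a = a @\<^sub>v 0\<^sub>v 0" by (intro eq_vecI) auto
  hence "(P @\<^sub>r Q) *\<^sub>v a = (P @\<^sub>r Q) *\<^sub>v (a @\<^sub>v 0\<^sub>v 0)" by simp
  also have "\<dots> = (P *\<^sub>v a + 0\<^sub>m (dim_row P) 0 *\<^sub>v 0\<^sub>v 0) @\<^sub>v (Q *\<^sub>v a + 0\<^sub>m (dim_row Q) 0 *\<^sub>v 0\<^sub>v 0)"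
    unfolding append_rows_def
    by (rule four_block_mat_mult_vec[OF P _ Q], auto)
  also have "\<dots> = (P *\<^sub>v a) @\<^sub>v (Q *\<^sub>v a)"
    by (intro eq_vecI) auto
  finally show ?thesis .
qed

lemma four_mv: assumes "A \<in> carrier_mat nr1 nc1" "B \<in> carrier_mat nr1 nc2" "C \<in> carrier_mat nr2 nc1"
  "D \<in> carrier_mat nr2 nc2" "dim_vec x = nc1" "dim_vec w = nc2"
  shows "four_block_mat A B C D *\<^sub>v (x @\<^sub>v w) = (A *\<^sub>v x + B *\<^sub>v w) @\<^sub>v (C *\<^sub>v x + D *\<^sub>v (w::'a::comm_ring_1 vec))"
  by (rule four_block_mat_mult_vec, insert assms, auto intro!: carrier_vecI)

lemma perm_step:
  fixes A B C D :: "real mat"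
  assumes A: "A \<in> carrier_mat s s" and B: "B \<in> carrier_mat s n" and C: "C \<in> carrier_mat n s"
    and D: "D \<in> carrier_mat n n"
    and pm: "perm_alg n m (A, B, C, D) = (Ap, Bp, Cp, Dp)"
    and x: "dim_vec x = s" and w: "dim_vec w = n" and a: "dim_vec a = n"
  shows "Ap *\<^sub>v (x @\<^sub>v w) + Bp *\<^sub>v a = (A *\<^sub>v x + B *\<^sub>v (ind_mat n {..<m} *\<^sub>v w + (1\<^sub>m n - ind_mat n {..<m}) *\<^sub>v a))
        @\<^sub>v (ind_mat n {..<m} *\<^sub>v a)"
    "Cp *\<^sub>v (x @\<^sub>v w) + Dp *\<^sub>v a = (1\<^sub>m n - ind_mat n {..<m}) *\<^sub>v (C *\<^sub>v x + D *\<^sub>v (ind_mat n {..<m} *\<^sub>v w + (1\<^sub>m n - ind_mat n {..<m}) *\<^sub>v a))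
       + ind_mat n {..<m} *\<^sub>v (C *\<^sub>v (A *\<^sub>v x + B *\<^sub>v (ind_mat n {..<m} *\<^sub>v w + (1\<^sub>m n - ind_mat n {..<m}) *\<^sub>v a))
              + D *\<^sub>v (ind_mat n {..<m} *\<^sub>v a))"
proof -
  let ?F = "ind_mat n {..<m}"
  let ?G = "1\<^sub>m n - ?F"
  have dims[simp]: "dim_row A = s" "dim_col A = s" "dim_row B = s" "dim_col B = n" "dim_row C = n" "dim_col C = s"
    "dim_row D = n" "dim_col D = n"
    using A B C D by auto
  from pm have Ap: "Ap = four_block_mat A (B * ?F) (0\<^sub>m n s) (0\<^sub>m n n)"
    and Bp: "Bp = (B * ?G) @\<^sub>r ?F"
    and Cp: "Cp = four_block_mat (?G * C + ?F * C * A) (?G * D * ?F + ?F * C * B * ?F) (0\<^sub>m 0 s) (0\<^sub>m 0 n)"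
    and Dp: "Dp = ?G * D * ?G + ?F * C * B * ?G + ?F * D * ?F"
    unfolding perm_alg_def Let_def by auto
  have "Ap *\<^sub>v (x @\<^sub>v w) = (A *\<^sub>v x + (B * ?F) *\<^sub>v w) @\<^sub>v (0\<^sub>m n s *\<^sub>v x + 0\<^sub>m n n *\<^sub>v w)"
    unfolding Ap by (rule four_mv, insert A B x w, auto)
  moreover have "Bp *\<^sub>v a = ((B * ?G) *\<^sub>v a) @\<^sub>v (?F *\<^sub>v a)"
    unfolding Bp by (rule append_rows_mv, insert a, auto)
  ultimately show "Ap *\<^sub>v (x @\<^sub>v w) + Bp *\<^sub>v a = (A *\<^sub>v x + B *\<^sub>v (?F *\<^sub>v w + ?G *\<^sub>v a)) @\<^sub>v (?F *\<^sub>v a)"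
    using x w a by (intro vec_eq_entries) auto
  have "Cp *\<^sub>v (x @\<^sub>v w) = ((?G * C + ?F * C * A) *\<^sub>v x + (?G * D * ?F + ?F * C * B * ?F) *\<^sub>v w)
       @\<^sub>v (0\<^sub>m 0 s *\<^sub>v x + 0\<^sub>m 0 n *\<^sub>v w)"
    unfolding Cp by (rule four_mv, insert A B C D x w, auto)
  thus "Cp *\<^sub>v (x @\<^sub>v w) + Dp *\<^sub>v a = ?G *\<^sub>v (C *\<^sub>v x + D *\<^sub>v (?F *\<^sub>v w + ?G *\<^sub>v a))
       + ?F *\<^sub>v (C *\<^sub>v (A *\<^sub>v x + B *\<^sub>v (?F *\<^sub>v w + ?G *\<^sub>v a)) + D *\<^sub>v (?F *\<^sub>v a))"
    unfolding Dp using x w a by (intro vec_eq_entries) auto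
qed

section \<open>The main setting\<close>

declare index_mult_mat_vec[simp del]

locale setting =
  fixes n s m :: nat and \<kappa> :: "nat set" and A B C D :: "real mat"
  assumes A: "A \<in> carrier_mat s s" and B: "B \<in> carrier_mat s n" and C: "C \<in> carrier_mat n s"
    and D: "D \<in> carrier_mat n n"
    and causal: "\<And>i j. i < j \<Longrightarrow> j < n \<Longrightarrow> D $$ (i,j) = 0"
    and dg: "\<And>i. i \<in> \<kappa> \<Longrightarrow> i < n \<Longrightarrow> D $$ (i,i) \<noteq> 0"
    and mn: "m \<le> n"
begin

abbreviation "E \<equiv> ind_mat n \<kappa>"
abbreviation "F \<equiv> ind_mat n {..<m}"
abbreviation "T \<equiv> E * D + (1\<^sub>m n - E)"
abbreviation "Ti \<equiv> minv T"

lemma dims[simp]: "dim_row A = s" "dim_col A = s" "dim_row B = s" "dim_col B = n" "dim_row C = n" "dim_col C = s"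
    "dim_row D = n" "dim_col D = n"
  using A B C D by auto

lemma T_carrier: "T \<in> carrier_mat n n" using D by auto

lemma T_entry: assumes i: "i < n" and j: "j < n"
  shows "T $$ (i,j) = (if i \<in> \<kappa> then D $$ (i,j) else if i = j then 1 else 0)"
proof -
  have "(E * D) $$ (i,j) = (\<Sum>k = 0..<n. (if i = k \<and> i \<in> \<kappa> then 1 else 0) * D $$ (k,j))"
    using i j by (simp add: ind_mat_def scalar_prod_def)
  also have "\<dots> = (\<Sum>k = 0..<n. if k = i then (if i \<in> \<kappa> then D $$ (i,j) else 0) else 0)"
    by (rule sum.cong, auto)
  also have "\<dots> = (if i \<in> \<kappa> then D $$ (i,j) else 0)" using i by simp
  finally show ?thesis using i j by (simp add: ind_mat_def)
qed

lemma T_inj: assumes z: "dim_vec z = n" and out: "\<And>j. j < n \<Longrightarrow> j \<notin> P \<Longrightarrow> z $ j = 0"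
    and inP: "\<And>i. i < n \<Longrightarrow> i \<in> P \<Longrightarrow> (T *\<^sub>v z) $ i = 0"
  shows "\<And>i. i < n \<Longrightarrow> z $ i = 0"
proof -
  have low: "T $$ (i,j) = 0" if "i < j" "j < n" for i j
    using that by (subst T_entry) (auto simp: causal)
  have dgT: "T $$ (i,i) \<noteq> 0" if "i < n" for i
    using that by (subst T_entry) (auto simp: dg)
  show "\<And>i. i < n \<Longrightarrow> z $ i = 0" by (rule tri_inj[OF T_carrier low dgT z out inP])
qed

lemma Ti: "T * Ti = 1\<^sub>m n" "Ti * T = 1\<^sub>m n" "Ti \<in> carrier_mat n n"
proof -
  have "z = 0\<^sub>v n" if z: "dim_vec z = n" and Tz: "T *\<^sub>v z = 0\<^sub>v n" for z
  proof -
    have "z $ i = 0" if "i < n" for i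
      by (rule T_inj[OF z, of UNIV], insert Tz that, auto)
    thus ?thesis using z by (intro eq_vecI) auto
  qed
  from minv_from_inj[OF T_carrier this] show "T * Ti = 1\<^sub>m n" "Ti * T = 1\<^sub>m n" "Ti \<in> carrier_mat n n" by auto
qed

lemma Ti_dims[simp]: "dim_row Ti = n" "dim_col Ti = n" using Ti(3) by auto

lemma causal_mv: assumes i: "i < m" and y: "dim_vec y = n"
  shows "(D *\<^sub>v y) $ i = (D *\<^sub>v (F *\<^sub>v y)) $ i"
proof -
  have i': "i < n" using i mn by simp
  have "(D *\<^sub>v y) $ i = (\<Sum>j = 0..<n. D $$ (i,j) * y $ j)" using i' y by (simp add: scalar_prod_def index_mult_mat_vec)
  also have "\<dots> = (\<Sum>j = 0..<n. D $$ (i,j) * (F *\<^sub>v y) $ j)"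
  proof (rule sum.cong)
    fix j assume j: "j \<in> {0..<n}"
    show "D $$ (i,j) * y $ j = D $$ (i,j) * (F *\<^sub>v y) $ j"
      using j y causal[of i j] i by (cases "j < m", auto)
  qed simp
  also have "\<dots> = (D *\<^sub>v (F *\<^sub>v y)) $ i" using i' y by (simp add: scalar_prod_def index_mult_mat_vec del: ind_idx)
  finally show ?thesis .
qed

abbreviation "G \<equiv> 1\<^sub>m n - F"
abbreviation "Dp \<equiv> G * D * G + F * C * B * G + F * D * F"
abbreviation "Tp \<equiv> E * Dp + (1\<^sub>m n - E)"

lemma Tp_carrier: "Tp \<in> carrier_mat n n" using D by auto

lemma Tp: "Tp * minv Tp = 1\<^sub>m n" "minv Tp * Tp = 1\<^sub>m n" "minv Tp \<in> carrier_mat n n"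
proof -
  have "z = 0\<^sub>v n" if z: "dim_vec z = n" and Tz: "Tp *\<^sub>v z = 0\<^sub>v n" for z
  proof -
    have Tzi: "(Tp *\<^sub>v z) $ i = 0" if "i < n" for i using Tz that by simp
    have "(z - F *\<^sub>v z) $ i = 0" if i: "i < n" for i
    proof (rule T_inj[of _ "{i. m \<le> i}"])
      fix i assume i: "i < n" "i \<in> {i. m \<le> i}"
      have "(T *\<^sub>v (z - F *\<^sub>v z)) $ i = (Tp *\<^sub>v z) $ i" using i z by simp
      thus "(T *\<^sub>v (z - F *\<^sub>v z)) $ i = 0" using Tzi[OF i(1)] by simp
    qed (insert z i, auto)
    hence zF: "F *\<^sub>v z = z" using z by (intro eq_vecI) (auto split: if_splits)
    have "z $ i = 0" if i: "i < n" for i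
    proof (rule T_inj[of _ "{..<m}"])
      fix i assume i: "i < n" "i \<in> {..<m}"
      have "(T *\<^sub>v z) $ i = (Tp *\<^sub>v z) $ i" using i z zF by simp
      thus "(T *\<^sub>v z) $ i = 0" using Tzi[OF i(1)] by simp
    next
      fix j assume "j < n" "j \<notin> {..<m}"
      thus "z $ j = 0" using arg_cong[OF zF, of "\<lambda>v. v $ j"] z by simp
    qed (insert z i, auto)
    thus ?thesis using z by (intro eq_vecI) auto
  qed
  from minv_from_inj[OF Tp_carrier this] show "Tp * minv Tp = 1\<^sub>m n" "minv Tp * Tp = 1\<^sub>m n" "minv Tp \<in> carrier_mat n n" by auto
qed

abbreviation "S \<equiv> four_block_mat (1\<^sub>m s) (0\<^sub>m s n) (F * E * C) (F * T * F)"

lemma S_mv: assumes x: "dim_vec x = s" and w: "dim_vec w = n"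
  shows "S *\<^sub>v (x @\<^sub>v w) = x @\<^sub>v ((F * E * C) *\<^sub>v x + (F * T * F) *\<^sub>v w)"
proof -
  have "S *\<^sub>v (x @\<^sub>v w) = (1\<^sub>m s *\<^sub>v x + 0\<^sub>m s n *\<^sub>v w) @\<^sub>v ((F * E * C) *\<^sub>v x + (F * T * F) *\<^sub>v w)"
    by (rule four_mv, insert x w C D, auto)
  also have "1\<^sub>m s *\<^sub>v x + 0\<^sub>m s n *\<^sub>v w = x" using x w by (intro vec_eq_entries) auto
  finally show ?thesis .
qed

lemma sim:
  assumes P: "perm_alg n m (A, B, C, D) = (Ap, Bp, Cp, Dp')"
    and X: "conj_alg n \<kappa> (Ap, Bp, Cp, Dp') = (A1, B1, C1, D1)"
    and Q: "conj_alg n \<kappa> (A, B, C, D) = (Aq, Bq, Cq, Dq)"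
    and Y: "perm_alg n m (Aq, Bq, Cq, Dq) = (A2, B2, C2, D2)"
    and x: "dim_vec x = s" and w: "dim_vec w = n" and a: "dim_vec a = n"
  shows "A2 *\<^sub>v (S *\<^sub>v (x @\<^sub>v w)) + B2 *\<^sub>v a = S *\<^sub>v (A1 *\<^sub>v (x @\<^sub>v w) + B1 *\<^sub>v a)"
    "C2 *\<^sub>v (S *\<^sub>v (x @\<^sub>v w)) + D2 *\<^sub>v a = C1 *\<^sub>v (x @\<^sub>v w) + D1 *\<^sub>v a"
proof -
  from P have Ap: "Ap = four_block_mat A (B * F) (0\<^sub>m n s) (0\<^sub>m n n)"
    and Bp: "Bp = (B * G) @\<^sub>r F"
    and Cp: "Cp = four_block_mat (G * C + F * C * A) (G * D * F + F * C * B * F) (0\<^sub>m 0 s) (0\<^sub>m 0 n)"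
    and Dp': "Dp' = Dp"
    unfolding perm_alg_def Let_def by auto
  have Apc: "Ap \<in> carrier_mat (s+n) (s+n)" unfolding Ap by (intro carrier_matI) simp_all
  have Bpc: "Bp \<in> carrier_mat (s+n) n" unfolding Bp by (rule carrier_append_rows, insert B, auto)
  have Cpc: "Cp \<in> carrier_mat n (s+n)" unfolding Cp by (intro carrier_matI) simp_all
  have Dpc: "Dp' \<in> carrier_mat n n" unfolding Dp' by (intro carrier_matI) simp_all
  from Q have Aq: "Aq = A - B * Ti * E * C" and Bq: "Bq = B * Ti"
    and Cq: "Cq = (1\<^sub>m n - E) * C - (E + (1\<^sub>m n - E) * D) * Ti * E * C"
    and Dq: "Dq = (E + (1\<^sub>m n - E) * D) * Ti"
    unfolding conj_alg_def Let_def by auto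
  have Aqc: "Aq \<in> carrier_mat s s" unfolding Aq by (intro carrier_matI) simp_all
  have Bqc: "Bq \<in> carrier_mat s n" unfolding Bq by (intro carrier_matI) simp_all
  have Cqc: "Cq \<in> carrier_mat n s" unfolding Cq by (intro carrier_matI) simp_all
  have Dqc: "Dq \<in> carrier_mat n n" unfolding Dq by (intro carrier_matI) simp_all
  have xw: "dim_vec (x @\<^sub>v w) = s + n" using x w by simp
  define u where "u = minv (E * Dp' + (1\<^sub>m n - E)) *\<^sub>v (a - E *\<^sub>v (Cp *\<^sub>v (x @\<^sub>v w)))"
  have du[simp]: "dim_vec u = n" unfolding u_def Dp' using Tp(3) by simp
  note Xs = conj_step[OF Apc Bpc Cpc Dpc Tp(3)[folded Dp'] refl Tp(1)[folded Dp'] X xw a u_def]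
  note Ps = perm_step[OF A B C D P x w du]
  define xp where "xp = A *\<^sub>v x + B *\<^sub>v (F *\<^sub>v w + G *\<^sub>v u)"
  have dxp[simp]: "dim_vec xp = s" unfolding xp_def using x w by simp
  note Ps = Ps[folded xp_def]
  have X1: "A1 *\<^sub>v (x @\<^sub>v w) + B1 *\<^sub>v a = xp @\<^sub>v (F *\<^sub>v u)" using Xs(1)[unfolded Ps(1)] .
  have X2: "C1 *\<^sub>v (x @\<^sub>v w) + D1 *\<^sub>v a = E *\<^sub>v u + (1\<^sub>m n - E) *\<^sub>v
     (G *\<^sub>v (C *\<^sub>v x + D *\<^sub>v (F *\<^sub>v w + G *\<^sub>v u)) + F *\<^sub>v (C *\<^sub>v xp + D *\<^sub>v (F *\<^sub>v u)))"
    using Xs(2)[unfolded Ps(2)] .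
  have X3: "a = E *\<^sub>v (G *\<^sub>v (C *\<^sub>v x + D *\<^sub>v (F *\<^sub>v w + G *\<^sub>v u)) + F *\<^sub>v (C *\<^sub>v xp + D *\<^sub>v (F *\<^sub>v u)))
      + (1\<^sub>m n - E) *\<^sub>v u"
    using Xs(3)[unfolded Ps(2)] .
  have ai: "a $ i = (if i \<in> \<kappa> then (if i < m then (C *\<^sub>v xp) $ i + (D *\<^sub>v (F *\<^sub>v u)) $ i
        else (C *\<^sub>v x) $ i + (D *\<^sub>v (F *\<^sub>v w)) $ i + (D *\<^sub>v u) $ i - (D *\<^sub>v (F *\<^sub>v u)) $ i) else u $ i)"
    if i: "i < n" for i
    using arg_cong[OF X3, of "\<lambda>v. v $ i"] i x w by simp
  define w2 where "w2 = (F * E * C) *\<^sub>v x + (F * T * F) *\<^sub>v w"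
  have dw2[simp]: "dim_vec w2 = n" unfolding w2_def using x w by simp
  have Sv: "S *\<^sub>v (x @\<^sub>v w) = x @\<^sub>v w2" unfolding w2_def by (rule S_mv[OF x w])
  note Ys = perm_step[OF Aqc Bqc Cqc Dqc Y x dw2 a]
  define q where "q = F *\<^sub>v w2 + G *\<^sub>v a"
  have dq[simp]: "dim_vec q = n" unfolding q_def by simp
  note Ys = Ys[folded q_def]
  define r where "r = Ti *\<^sub>v (q - E *\<^sub>v (C *\<^sub>v x))"
  note Qs = conj_step[OF A B C D Ti(3) refl Ti(1) Q x dq r_def]
  have Tr: "q - E *\<^sub>v (C *\<^sub>v x) = T *\<^sub>v (F *\<^sub>v w + G *\<^sub>v u)"
  proof (intro vec_eq_entries)
    fix i assume "i < dim_vec (T *\<^sub>v (F *\<^sub>v w + G *\<^sub>v u))"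
    hence i: "i < n" by simp
    show "(q - E *\<^sub>v (C *\<^sub>v x)) $ i = (T *\<^sub>v (F *\<^sub>v w + G *\<^sub>v u)) $ i"
    proof (cases "i < m")
      case True
      thus ?thesis using i x w a causal_mv[OF True du] unfolding q_def w2_def by simp
    next
      case False
      thus ?thesis using i x w a ai[OF i] unfolding q_def w2_def by simp
    qed
  qed simp
  have r_eq: "r = F *\<^sub>v w + G *\<^sub>v u" unfolding r_def Tr
    by (rule mv_cancel[OF Ti(2) Ti(3) T_carrier], insert w du, simp)
  have x2: "Aq *\<^sub>v x + Bq *\<^sub>v q = xp" unfolding Qs(1) r_eq xp_def ..
  define r2 where "r2 = Ti *\<^sub>v (F *\<^sub>v a - E *\<^sub>v (C *\<^sub>v xp))"
  have dFa: "dim_vec (F *\<^sub>v a) = n" by simp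
  have dr2[simp]: "dim_vec r2 = n" unfolding r2_def by simp
  note Q2s = conj_step[OF A B C D Ti(3) refl Ti(1) Q dxp dFa r2_def]
  have r2i: "r2 $ i = u $ i" if i: "i < m" for i
  proof -
    have "(F *\<^sub>v r2 - F *\<^sub>v u) $ i = 0"
    proof (rule T_inj[of _ "{..<m}"])
      fix i assume i: "i < n" "i \<in> {..<m}"
      have e1: "(F *\<^sub>v a) $ i = (E *\<^sub>v (C *\<^sub>v xp + D *\<^sub>v r2) + (1\<^sub>m n - E) *\<^sub>v r2) $ i"
        using arg_cong[OF Q2s(3), of "\<lambda>v. v $ i"] .
      show "(T *\<^sub>v (F *\<^sub>v r2 - F *\<^sub>v u)) $ i = 0" using causal_mv[of i r2] i a e1 ai[OF i(1)] by (auto split: if_splits)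
    qed (insert i mn, auto)
    thus ?thesis using i mn by simp
  qed
  have Dr2i: "(D *\<^sub>v r2) $ i = (D *\<^sub>v (F *\<^sub>v u)) $ i" if i: "i < m" for i
  proof -
    have "F *\<^sub>v r2 = F *\<^sub>v u" by (intro eq_vecI) (auto simp: r2i)
    thus ?thesis using causal_mv[OF i dr2] by simp
  qed
  have dFu: "dim_vec (F *\<^sub>v u) = n" by simp
  have Fa_eq: "F *\<^sub>v a = (F * E * C) *\<^sub>v xp + (F * T * F) *\<^sub>v (F *\<^sub>v u)"
  proof (intro vec_eq_entries)
    fix i assume "i < dim_vec ((F * E * C) *\<^sub>v xp + (F * T * F) *\<^sub>v (F *\<^sub>v u))"
    hence i: "i < n" by simp
    show "(F *\<^sub>v a) $ i = ((F * E * C) *\<^sub>v xp + (F * T * F) *\<^sub>v (F *\<^sub>v u)) $ i"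
      using i a ai[OF i] by simp
  qed simp
  show "A2 *\<^sub>v (S *\<^sub>v (x @\<^sub>v w)) + B2 *\<^sub>v a = S *\<^sub>v (A1 *\<^sub>v (x @\<^sub>v w) + B1 *\<^sub>v a)"
    unfolding Sv X1 Ys(1) x2 S_mv[OF dxp dFu] Fa_eq ..
  show "C2 *\<^sub>v (S *\<^sub>v (x @\<^sub>v w)) + D2 *\<^sub>v a = C1 *\<^sub>v (x @\<^sub>v w) + D1 *\<^sub>v a"
    unfolding Sv Ys(2) x2 Qs(2) Q2s(2) X2 r_eq
  proof (intro vec_eq_entries)
    fix i assume "i < dim_vec (E *\<^sub>v u + (1\<^sub>m n - E) *\<^sub>v
     (G *\<^sub>v (C *\<^sub>v x + D *\<^sub>v (F *\<^sub>v w + G *\<^sub>v u)) + F *\<^sub>v (C *\<^sub>v xp + D *\<^sub>v (F *\<^sub>v u))))"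
    hence i: "i < n" by simp
    show "(G *\<^sub>v (E *\<^sub>v (F *\<^sub>v w + G *\<^sub>v u) + (1\<^sub>m n - E) *\<^sub>v (C *\<^sub>v x + D *\<^sub>v (F *\<^sub>v w + G *\<^sub>v u))) +
          F *\<^sub>v (E *\<^sub>v r2 + (1\<^sub>m n - E) *\<^sub>v (C *\<^sub>v xp + D *\<^sub>v r2))) $ i =
         (E *\<^sub>v u + (1\<^sub>m n - E) *\<^sub>v
     (G *\<^sub>v (C *\<^sub>v x + D *\<^sub>v (F *\<^sub>v w + G *\<^sub>v u)) + F *\<^sub>v (C *\<^sub>v xp + D *\<^sub>v (F *\<^sub>v u)))) $ i"
    proof (cases "i < m")
      case True
      thus ?thesis using i x w r2i[OF True] Dr2i[OF True] by simp
    next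
      case False
      thus ?thesis using i x w by simp
    qed
  qed simp
qed

lemma sim_mat:
  assumes P: "perm_alg n m (A, B, C, D) = (Ap, Bp, Cp, Dp')"
    and X: "conj_alg n \<kappa> (Ap, Bp, Cp, Dp') = (A1, B1, C1, D1)"
    and Q: "conj_alg n \<kappa> (A, B, C, D) = (Aq, Bq, Cq, Dq)"
    and Y: "perm_alg n m (Aq, Bq, Cq, Dq) = (A2, B2, C2, D2)"
  shows "A2 * S = S * A1" "B2 = S * B1" "C2 * S = C1" "D2 = D1"
    "A1 \<in> carrier_mat (s+n) (s+n)" "B1 \<in> carrier_mat (s+n) n" "C1 \<in> carrier_mat n (s+n)" "D1 \<in> carrier_mat n n"
    "A2 \<in> carrier_mat (s+n) (s+n)" "B2 \<in> carrier_mat (s+n) n" "C2 \<in> carrier_mat n (s+n)" "D2 \<in> carrier_mat n n"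
    "S \<in> carrier_mat (s+n) (s+n)"
proof -
  note sm = sim[OF P X Q Y]
  from P have Ap: "Ap = four_block_mat A (B * F) (0\<^sub>m n s) (0\<^sub>m n n)"
    and Bp: "Bp = (B * G) @\<^sub>r F"
    and Cp: "Cp = four_block_mat (G * C + F * C * A) (G * D * F + F * C * B * F) (0\<^sub>m 0 s) (0\<^sub>m 0 n)"
    and Dp': "Dp' = Dp"
    unfolding perm_alg_def Let_def by auto
  have Bpc: "Bp \<in> carrier_mat (s+n) n" unfolding Bp by (rule carrier_append_rows, insert B, auto)
  hence Bpd[simp]: "dim_row Bp = s + n" "dim_col Bp = n" by auto
  from X have A1: "A1 = Ap - Bp * minv (E * Dp' + (1\<^sub>m n - E)) * E * Cp"
    and B1: "B1 = Bp * minv (E * Dp' + (1\<^sub>m n - E))"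
    and C1: "C1 = (1\<^sub>m n - E) * Cp - (E + (1\<^sub>m n - E) * Dp') * minv (E * Dp' + (1\<^sub>m n - E)) * E * Cp"
    and D1: "D1 = (E + (1\<^sub>m n - E) * Dp') * minv (E * Dp' + (1\<^sub>m n - E))"
    unfolding conj_alg_def Let_def by auto
  have Tpd[simp]: "dim_row (minv (E * Dp' + (1\<^sub>m n - E))) = n" "dim_col (minv (E * Dp' + (1\<^sub>m n - E))) = n"
    by (rule carrier_matD(1)[OF Tp(3)[folded Dp']], rule carrier_matD(2)[OF Tp(3)[folded Dp']])
  show A1c: "A1 \<in> carrier_mat (s+n) (s+n)" unfolding A1 Ap Cp by (intro carrier_matI) simp_all
  show B1c: "B1 \<in> carrier_mat (s+n) n" unfolding B1 by (intro carrier_matI) simp_all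
  have [simp]: "dim_row Dp' = n" "dim_col Dp' = n" unfolding Dp' by simp_all
  show C1c: "C1 \<in> carrier_mat n (s+n)" unfolding C1 Cp by (intro carrier_matI) simp_all
  show D1c: "D1 \<in> carrier_mat n n" unfolding D1 by (intro carrier_matI) simp_all
  from Q have Aq: "Aq = A - B * Ti * E * C" and Bq: "Bq = B * Ti"
    and Cq: "Cq = (1\<^sub>m n - E) * C - (E + (1\<^sub>m n - E) * D) * Ti * E * C"
    and Dq: "Dq = (E + (1\<^sub>m n - E) * D) * Ti"
    unfolding conj_alg_def Let_def by auto
  have dAq[simp]: "dim_row Aq = s" "dim_col Aq = s" unfolding Aq by simp_all
  from Y have A2: "A2 = four_block_mat Aq (Bq * F) (0\<^sub>m n s) (0\<^sub>m n n)"
    and B2: "B2 = (Bq * G) @\<^sub>r F"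
    and C2: "C2 = four_block_mat (G * Cq + F * Cq * Aq) (G * Dq * F + F * Cq * Bq * F) (0\<^sub>m 0 s) (0\<^sub>m 0 n)"
    and D2: "D2 = G * Dq * G + F * Cq * Bq * G + F * Dq * F"
    unfolding perm_alg_def Let_def by auto
  show A2c: "A2 \<in> carrier_mat (s+n) (s+n)" unfolding A2 Bq by (intro carrier_matI) simp_all
  show B2c: "B2 \<in> carrier_mat (s+n) n" unfolding B2 by (rule carrier_append_rows, insert B, auto simp: Bq)
  show C2c: "C2 \<in> carrier_mat n (s+n)" unfolding C2 Cq Bq by (intro carrier_matI) simp_all
  show D2c: "D2 \<in> carrier_mat n n" unfolding D2 Cq Bq Dq by (intro carrier_matI) simp_all
  show Sc: "S \<in> carrier_mat (s+n) (s+n)" by (intro carrier_matI) simp_all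
  have [simp]: "dim_row A1 = s + n" "dim_col A1 = s + n" "dim_row B1 = s + n" "dim_col B1 = n"
    "dim_row C1 = n" "dim_col C1 = s + n" "dim_row D1 = n" "dim_col D1 = n"
    "dim_row A2 = s + n" "dim_col A2 = s + n" "dim_row B2 = s + n" "dim_col B2 = n"
    "dim_row C2 = n" "dim_col C2 = s + n" "dim_row D2 = n" "dim_col D2 = n"
    "dim_row S = s + n" "dim_col S = s + n"
    using A1c B1c C1c D1c A2c B2c C2c D2c Sc by auto
  have split: "v = vec_first v s @\<^sub>v vec_last v n" if "dim_vec v = s + n" for v :: "real vec"
    using that by (intro vec_first_last_append[symmetric] carrier_vecI)
  have z0: "0\<^sub>v (s + n) = 0\<^sub>v s @\<^sub>v (0\<^sub>v n :: real vec)" by (intro eq_vecI) auto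
  have mv0: "M *\<^sub>v 0\<^sub>v k = 0\<^sub>v (dim_row M)" if "dim_col M = k" for M :: "real mat" and k
    using that by (intro eq_vecI) (auto simp: index_mult_mat_vec scalar_prod_def)
  have add0: "v + 0\<^sub>v k = v" "0\<^sub>v k + v = v" if "dim_vec v = k" for v :: "real vec" and k
    using that by (auto intro!: eq_vecI)
  show "A2 * S = S * A1"
  proof (rule mat_eq_on_vec[of _ "s+n" "s+n"])
    fix v :: "real vec" assume v: "dim_vec v = s + n"
    have "A2 *\<^sub>v (S *\<^sub>v v) + B2 *\<^sub>v 0\<^sub>v n = S *\<^sub>v (A1 *\<^sub>v v + B1 *\<^sub>v 0\<^sub>v n)"
      using sm(1)[of "vec_first v s" "vec_last v n" "0\<^sub>v n"] split[OF v] by simp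
    thus "(A2 * S) *\<^sub>v v = (S * A1) *\<^sub>v v" using v by (simp add: mv0 add0)
  qed (insert A2c Sc A1c, auto)
  show "B2 = S * B1"
  proof (rule mat_eq_on_vec[of _ "s+n" n])
    fix a :: "real vec" assume a: "dim_vec a = n"
    have "A2 *\<^sub>v (S *\<^sub>v (0\<^sub>v s @\<^sub>v 0\<^sub>v n)) + B2 *\<^sub>v a = S *\<^sub>v (A1 *\<^sub>v (0\<^sub>v s @\<^sub>v 0\<^sub>v n) + B1 *\<^sub>v a)"
      using sm(1)[of "0\<^sub>v s" "0\<^sub>v n" a] a by simp
    thus "B2 *\<^sub>v a = (S * B1) *\<^sub>v a" using a unfolding z0[symmetric] by (simp add: mv0 add0)
  qed (insert B2c Sc B1c, auto)
  show "C2 * S = C1"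
  proof (rule mat_eq_on_vec[of _ n "s+n"])
    fix v :: "real vec" assume v: "dim_vec v = s + n"
    have "C2 *\<^sub>v (S *\<^sub>v v) + D2 *\<^sub>v 0\<^sub>v n = C1 *\<^sub>v v + D1 *\<^sub>v 0\<^sub>v n"
      using sm(2)[of "vec_first v s" "vec_last v n" "0\<^sub>v n"] split[OF v] by simp
    thus "(C2 * S) *\<^sub>v v = C1 *\<^sub>v v" using v by (simp add: mv0 add0)
  qed (insert C2c Sc C1c, auto)
  show "D2 = D1"
  proof (rule mat_eq_on_vec[of _ n n])
    fix a :: "real vec" assume a: "dim_vec a = n"
    have "C2 *\<^sub>v (S *\<^sub>v (0\<^sub>v s @\<^sub>v 0\<^sub>v n)) + D2 *\<^sub>v a = C1 *\<^sub>v (0\<^sub>v s @\<^sub>v 0\<^sub>v n) + D1 *\<^sub>v a"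
      using sm(2)[of "0\<^sub>v s" "0\<^sub>v n" a] a by simp
    thus "D2 *\<^sub>v a = D1 *\<^sub>v a" using a unfolding z0[symmetric] by (simp add: mv0 add0)
  qed (insert D2c D1c, auto)
qed

end

section \<open>Transfer functions of similar realizations\<close>

lemma minv_from_det:
  assumes T: "(T :: 'a :: field mat) \<in> carrier_mat n n" and dT: "det T \<noteq> 0"
  shows "T * minv T = 1\<^sub>m n" "minv T * T = 1\<^sub>m n" "minv T \<in> carrier_mat n n"
proof -
  have U: "T \<in> Units (ring_mat TYPE('a) n ())" by (rule det_non_zero_imp_unit[OF T dT])
  then obtain B where MB: "mat_inverse T = Some B"
    using mat_inverse(1)[OF T, of "()"] by (cases "mat_inverse T", auto)
  hence mB: "minv T = B" by (simp add: minv_def)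
  from mat_inverse(2)[OF T MB] show "T * minv T = 1\<^sub>m n" "minv T * T = 1\<^sub>m n" "minv T \<in> carrier_mat n n"
    unfolding mB by auto
qed

lemma mv_smultv[simp]: "dim_col A = dim_vec v \<Longrightarrow> (A::'a::comm_ring_1 mat) *\<^sub>v (c \<cdot>\<^sub>v v) = c \<cdot>\<^sub>v (A *\<^sub>v v)"
  by (intro eq_vecI) (auto simp: index_mult_mat_vec scalar_prod_def sum_distrib_left ac_simps)

lemma transfer_sim:
  fixes A1 B1 C1 D1 A2 B2 C2 D2 S :: "real mat"
  assumes A1: "A1 \<in> carrier_mat N N" and B1: "B1 \<in> carrier_mat N k" and C1: "C1 \<in> carrier_mat k N"
    and D1: "D1 \<in> carrier_mat k k"
    and A2: "A2 \<in> carrier_mat N N" and B2: "B2 \<in> carrier_mat N k" and C2: "C2 \<in> carrier_mat k N"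
    and S: "S \<in> carrier_mat N N"
    and eA: "A2 * S = S * A1" and eB: "B2 = S * B1" and eC: "C2 * S = C1" and eD: "D2 = D1"
    and r1: "res_ok (A1, B1, C1, D1) z" and r2: "res_ok (A2, B2, C2, D2) z"
  shows "transfer (A1, B1, C1, D1) z = transfer (A2, B2, C2, D2) z"
proof -
  let ?h = "map_mat complex_of_real"
  have [simp]: "dim_row A1 = N" "dim_col A1 = N" "dim_row B1 = N" "dim_col B1 = k" "dim_row C1 = k" "dim_col C1 = N"
    "dim_row D1 = k" "dim_col D1 = k" "dim_row A2 = N" "dim_col A2 = N" "dim_row B2 = N" "dim_col B2 = k"
    "dim_row C2 = k" "dim_col C2 = N" "dim_row S = N" "dim_col S = N"
    using A1 B1 C1 D1 A2 B2 C2 S by auto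
  define Z1 where "Z1 = z \<cdot>\<^sub>m 1\<^sub>m N - ?h A1"
  define Z2 where "Z2 = z \<cdot>\<^sub>m 1\<^sub>m N - ?h A2"
  have Z1c: "Z1 \<in> carrier_mat N N" and Z2c: "Z2 \<in> carrier_mat N N" unfolding Z1_def Z2_def by auto
  have d1: "det Z1 \<noteq> 0" using r1 unfolding res_ok_def Z1_def by simp
  have d2: "det Z2 \<noteq> 0" using r2 unfolding res_ok_def Z2_def by simp
  note N1 = minv_from_det[OF Z1c d1]
  note N2 = minv_from_det[OF Z2c d2]
  have [simp]: "dim_row (minv Z1) = N" "dim_col (minv Z1) = N" "dim_row (minv Z2) = N" "dim_col (minv Z2) = N"
    using N1(3) N2(3) by auto
  have hA: "?h A2 * ?h S = ?h S * ?h A1"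
    by (metis eA of_real_hom.mat_hom_mult[OF A2 S] of_real_hom.mat_hom_mult[OF S A1])
  have key1: "?h A2 *\<^sub>v (?h S *\<^sub>v v) = ?h S *\<^sub>v (?h A1 *\<^sub>v v)" if v: "dim_vec v = N" for v
  proof -
    have "(?h A2 * ?h S) *\<^sub>v v = (?h S * ?h A1) *\<^sub>v v" using hA by simp
    thus ?thesis using v by simp
  qed
  have ZS: "Z2 *\<^sub>v (?h S *\<^sub>v v) = ?h S *\<^sub>v (Z1 *\<^sub>v v)" if v: "dim_vec v = N" for v
    unfolding Z1_def Z2_def using v key1[OF v] by simp
  have NS: "minv Z2 *\<^sub>v (?h S *\<^sub>v y) = ?h S *\<^sub>v (minv Z1 *\<^sub>v y)" if y: "dim_vec y = N" for y
  proof -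
    define v where "v = minv Z1 *\<^sub>v y"
    have v: "dim_vec v = N" unfolding v_def using y by simp
    have yv: "y = Z1 *\<^sub>v v" unfolding v_def by (rule mv_cancel[OF N1(1) Z1c N1(3) y, symmetric])
    have "minv Z2 *\<^sub>v (?h S *\<^sub>v y) = minv Z2 *\<^sub>v (Z2 *\<^sub>v (?h S *\<^sub>v v))" unfolding yv ZS[OF v] ..
    also have "\<dots> = ?h S *\<^sub>v v" by (rule mv_cancel[OF N2(2) N2(3) Z2c], insert v, simp)
    finally show ?thesis unfolding v_def .
  qed
  have hB: "?h B2 = ?h S * ?h B1" unfolding eB by (rule of_real_hom.mat_hom_mult[OF S B1])
  have hC: "?h C1 = ?h C2 * ?h S" unfolding eC[symmetric] by (rule of_real_hom.mat_hom_mult[OF C2 S])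
  have main: "?h C1 * minv Z1 * ?h B1 = ?h C2 * minv Z2 * ?h B2"
  proof (rule mat_eq_on_vec[of _ k k])
    fix v :: "complex vec" assume v: "dim_vec v = k"
    show "(?h C1 * minv Z1 * ?h B1) *\<^sub>v v = (?h C2 * minv Z2 * ?h B2) *\<^sub>v v"
      unfolding hB hC using v NS[of "?h B1 *\<^sub>v v"] by simp
  qed (auto)
  show ?thesis unfolding transfer_def using main eD
    by (simp add: Z1_def Z2_def)
qed

section \<open>Diagonal of an invertible principal block\<close>

lemma diag_from_block:
  fixes D :: "real mat"
  assumes D: "D \<in> carrier_mat n n"
    and low: "\<And>i j. i < j \<Longrightarrow> j < n \<Longrightarrow> D $$ (i,j) = 0"
    and kap: "\<kappa> \<subseteq> {..<n}"
    and inv: "invertible_mat (submatrix D \<kappa> \<kappa>)"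
    and k: "k \<in> \<kappa>"
  shows "D $$ (k,k) \<noteq> 0"
proof -
  let ?K = "submatrix D \<kappa> \<kappa>"
  have fin: "finite \<kappa>" using kap finite_subset by blast
  have set: "{i. i < dim_row D \<and> i \<in> \<kappa>} = \<kappa>" "{i. i < dim_col D \<and> i \<in> \<kappa>} = \<kappa>" using kap D by auto
  let ?c = "card \<kappa>"
  have Kc: "?K \<in> carrier_mat ?c ?c" unfolding carrier_mat_def using set by (simp add: dim_submatrix)
  from inv obtain B where KB: "?K * B = 1\<^sub>m (dim_row ?K)" and BK: "B * ?K = 1\<^sub>m (dim_row B)"
    unfolding invertible_mat_def inverts_mat_def by blast
  have "dim_col B = ?c" using arg_cong[OF KB, of dim_col] Kc by simp
  moreover have "dim_row B = ?c" using arg_cong[OF BK, of dim_col] Kc by simp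
  ultimately have Bc: "B \<in> carrier_mat ?c ?c" by auto
  have "det ?K * det B = 1" using arg_cong[OF KB, of det] det_mult[OF Kc Bc] Kc by simp
  hence dK: "det ?K \<noteq> 0" by auto
  have entry: "?K $$ (i,j) = D $$ (pick \<kappa> i, pick \<kappa> j)" if "i < ?c" "j < ?c" for i j
    using that set by (simp add: submatrix_index)
  have lowK: "?K $$ (i,j) = 0" if "i < j" "j < ?c" for i j
  proof -
    have "pick \<kappa> i < pick \<kappa> j" using pick_mono[of j \<kappa> i] that by simp
    moreover have "pick \<kappa> j \<in> \<kappa>" using pick_in_set[of j \<kappa>] that by simp
    ultimately show ?thesis using entry[of i j] that low kap by auto
  qed
  have "det ?K = prod_list (diag_mat ?K)" by (rule det_lower_triangular[OF lowK Kc])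
  also have "\<dots> = (\<Prod>i = 0..<?c. ?K $$ (i,i))" using Kc by (simp add: prod_list_diag_prod)
  finally have "(\<Prod>i = 0..<?c. ?K $$ (i,i)) \<noteq> 0" using dK by simp
  hence nz: "?K $$ (i,i) \<noteq> 0" if "i < ?c" for i using that by simp
  let ?i = "card {a \<in> \<kappa>. a < k}"
  have "{a \<in> \<kappa>. a < k} \<subset> \<kappa>" using k by auto
  hence ic: "?i < ?c" by (rule psubset_card_mono[OF fin])
  have "pick \<kappa> ?i = k" by (rule pick_card_in_set[OF k])
  thus ?thesis using nz[OF ic] entry[OF ic ic] by simp
qed

section \<open>Main result\<close>

theorem propositionG1:
  fixes n m :: nat and \<kappa> :: "nat set" and R :: lti
  assumes "lti_wf n R"
    and "causal n R"
    and "\<kappa> \<subseteq> {..<n}"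
    and "invertible_mat (Dblock R \<kappa>)"
    and "m < n"
  shows "same_transfer (conj_alg n \<kappa> (perm_alg n m R)) (perm_alg n m (conj_alg n \<kappa> R))"
proof -
  obtain A B C D where R: "R = (A, B, C, D)" by (cases R) auto
  from assms(1) obtain s where A: "A \<in> carrier_mat s s" and B: "B \<in> carrier_mat s n"
    and C: "C \<in> carrier_mat n s" and D: "D \<in> carrier_mat n n"
    unfolding lti_wf_def R by auto
  have low: "\<And>i j. i < j \<Longrightarrow> j < n \<Longrightarrow> D $$ (i,j) = 0"
    using assms(2) unfolding causal_def R by auto
  have blk: "invertible_mat (submatrix D \<kappa> \<kappa>)" using assms(4) unfolding Dblock_def R by simp
  have dg: "\<And>i. i \<in> \<kappa> \<Longrightarrow> i < n \<Longrightarrow> D $$ (i,i) \<noteq> 0"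
    using diag_from_block[OF D low assms(3) blk] by blast
  interpret setting n s m \<kappa> A B C D
    by (unfold_locales, insert A B C D low dg assms(5), auto)
  obtain Ap Bp Cp Dp' where P: "perm_alg n m (A, B, C, D) = (Ap, Bp, Cp, Dp')"
    by (cases "perm_alg n m (A, B, C, D)") auto
  obtain A1 B1 C1 D1 where X: "conj_alg n \<kappa> (Ap, Bp, Cp, Dp') = (A1, B1, C1, D1)"
    by (cases "conj_alg n \<kappa> (Ap, Bp, Cp, Dp')") auto
  obtain Aq Bq Cq Dq where Q: "conj_alg n \<kappa> (A, B, C, D) = (Aq, Bq, Cq, Dq)"
    by (cases "conj_alg n \<kappa> (A, B, C, D)") auto
  obtain A2 B2 C2 D2 where Y: "perm_alg n m (Aq, Bq, Cq, Dq) = (A2, B2, C2, D2)"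
    by (cases "perm_alg n m (Aq, Bq, Cq, Dq)") auto
  note sm = sim_mat[OF P X Q Y]
  show ?thesis unfolding same_transfer_def R P X Q Y
    using transfer_sim[OF sm(5) sm(6) sm(7) sm(8) sm(9) sm(10) sm(11) sm(13) sm(1) sm(2) sm(3) sm(4)] by blast
qed

end
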